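(* Fix $\beta\in\mathcal{F}$ with $|\beta|_\mathfrak{p}>1$. Then for Haar-almost every $x\in\mathcal{F}$, the sequence $([\beta^n x])_{n\ge1}$ is uniformly distributed in $\mathcal{O}$.
   Context: $\mathcal{F}$ is a non-Archimedean local field with valuation ring $\mathcal{O}$, maximal ideal $\mathfrak{p}$, $q=\#\mathcal{O}/\mathfrak{p}$, normalized absolute value $|\cdot|_\mathfrak{p}$ and prime element $\pi$. Fix representatives $C\subset\mathcal{O}$ of $\mathcal{O}/\mathfrak{p}$ with $0\in C$; writing $x=\sum_{n\ge v}c_n\pi^n$ ($c_n\in C$), the integral part is $[x]=\sum_{n\ge0}c_n\pi^n$. $D(a,r)=\{x:|x-a|_\mathfrak{p}\le r\}$. A sequence $(x_n)\subset\mathcal{O}$ is uniformly distributed in $\mathcal{O}$ if for all $a\in\mathcal{O}$, $k\in\mathbb{N}$, $\frac1N\#\{1\le n\le N:x_n\in D(a,q^{-k})\}\to q^{-k}$. *)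

theory Defs
  imports "HOL-Probability.Probability"
begin

text \<open>A non-Archimedean local field is encoded abstractly: a field 'a carrying an
absolute value av, complete, discretely valued with value group q^Z,
with prime element prm (av prm = 1/q, normalized), and a set C of
representatives of the residue field O/p (which has q elements), 0 in C.\<close>

definition val_ring :: "('a \<Rightarrow> real) \<Rightarrow> 'a set" where
  "val_ring av = {x. av x \<le> 1}"

definition disc :: "('a::ab_group_add \<Rightarrow> real) \<Rightarrow> 'a \<Rightarrow> real \<Rightarrow> 'a set" where
  "disc av a r = {x. av (x - a) \<le> r}"

definition nonarch_local_field ::
  "('a::field \<Rightarrow> real) \<Rightarrow> nat \<Rightarrow> 'a \<Rightarrow> 'a set \<Rightarrow> bool" where
  "nonarch_local_field av q prm C \<longleftrightarrow>
     (\<forall>x. av x \<ge> 0) \<and> (\<forall>x. av x = 0 \<longleftrightarrow> x = 0) \<and>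
     (\<forall>x y. av (x * y) = av x * av y) \<and>
     (\<forall>x y. av (x + y) \<le> max (av x) (av y)) \<and>
     (\<forall>x. x \<noteq> 0 \<longrightarrow> (\<exists>k::int. av x = real q powr real_of_int k)) \<and>
     av prm = 1 / real q \<and>
     (\<forall>X::nat \<Rightarrow> 'a. (\<forall>e>0. \<exists>N. \<forall>m\<ge>N. \<forall>n\<ge>N. av (X m - X n) < e)
         \<longrightarrow> (\<exists>L. (\<lambda>n. av (X n - L)) \<longlonglongrightarrow> 0)) \<and>
     finite C \<and> card C = q \<and> C \<subseteq> val_ring av \<and> 0 \<in> C \<and>
     (\<forall>x\<in>val_ring av. \<exists>!c\<in>C. av (x - c) < 1)"

text \<open>Integral part: if x = sum_{n>=v} c_n prm^n with digits c_n in C, then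
[x] = sum_{n>=0} c_n prm^n (limit w.r.t. av).\<close>
definition int_part :: "('a::field \<Rightarrow> real) \<Rightarrow> 'a \<Rightarrow> 'a set \<Rightarrow> 'a \<Rightarrow> 'a" where
  "int_part av prm C x = (THE y. \<exists>c::int \<Rightarrow> 'a. (\<forall>n. c n \<in> C) \<and>
      finite {n. n < 0 \<and> c n \<noteq> 0} \<and>
      (\<lambda>N. av ((\<Sum>n<N. c (int n) * prm ^ n) - y)) \<longlonglongrightarrow> 0 \<and>
      x = y + (\<Sum>n\<in>{n. n < 0 \<and> c n \<noteq> 0}. c n * inverse prm ^ nat (- n)))"

definition unif_distr :: "('a::field \<Rightarrow> real) \<Rightarrow> nat \<Rightarrow> (nat \<Rightarrow> 'a) \<Rightarrow> bool" where
  "unif_distr av q xs \<longleftrightarrow> (\<forall>n. xs n \<in> val_ring av) \<and>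
     (\<forall>a\<in>val_ring av. \<forall>k::nat.
        (\<lambda>N. real (card {n\<in>{1..N}. xs n \<in> disc av a (real q powr (- real k))}) / real N)
          \<longlonglongrightarrow> real q powr (- real k))"

definition haar_measure :: "('a::field \<Rightarrow> real) \<Rightarrow> 'a measure \<Rightarrow> bool" where
  "haar_measure av M \<longleftrightarrow> space M = UNIV \<and>
     sets M = sigma_sets UNIV {disc av a r | a r. True} \<and>
     (\<forall>A\<in>sets M. \<forall>a. emeasure M ((+) a ` A) = emeasure M A) \<and>
     0 < emeasure M (val_ring av) \<and> emeasure M (val_ring av) < \<infinity>"

end

theory Submission
  imports Defs "HOL-Library.Discrete_Functions"
begin

locale nalf =
  fixes av :: "'a::field \<Rightarrow> real" and q :: nat and prm :: 'a and C :: "'a set"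
  assumes nal: "nonarch_local_field av q prm C"
  and q2: "2 \<le> q"
begin

lemmas L = nal[unfolded nonarch_local_field_def]
lemma av_nonneg: "av x \<ge> 0" using L[THEN conjunct1] by blast
lemma av_zero_iff: "av x = 0 \<longleftrightarrow> x = 0" using L[THEN conjunct2, THEN conjunct1] by blast
lemma av_mult: "av (x * y) = av x * av y" using L[THEN conjunct2, THEN conjunct2, THEN conjunct1] by blast
lemma av_ultra: "av (x + y) \<le> max (av x) (av y)" using L[THEN conjunct2, THEN conjunct2, THEN conjunct2, THEN conjunct1] by blast
lemma av_group: "x \<noteq> 0 \<Longrightarrow> \<exists>k::int. av x = real q powr real_of_int k"
  using L[THEN conjunct2, THEN conjunct2, THEN conjunct2, THEN conjunct2, THEN conjunct1] by blast
lemmas L6 = L[THEN conjunct2, THEN conjunct2, THEN conjunct2, THEN conjunct2, THEN conjunct2]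
lemma av_prm: "av prm = 1 / real q" using L6[THEN conjunct1] .
lemma complete: "\<forall>X::nat \<Rightarrow> 'a. (\<forall>e>0. \<exists>N. \<forall>m\<ge>N. \<forall>n\<ge>N. av (X m - X n) < e)
         \<longrightarrow> (\<exists>L. (\<lambda>n. av (X n - L)) \<longlonglongrightarrow> 0)" using L6[THEN conjunct2, THEN conjunct1] .
lemmas L8 = L6[THEN conjunct2, THEN conjunct2]
lemma C_fin: "finite C" using L8[THEN conjunct1] .
lemma C_card: "card C = q" using L8[THEN conjunct2, THEN conjunct1] .
lemma C_O: "C \<subseteq> val_ring av" using L8[THEN conjunct2, THEN conjunct2, THEN conjunct1] .
lemma C0: "0 \<in> C" using L8[THEN conjunct2, THEN conjunct2, THEN conjunct2, THEN conjunct1] .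
lemma C_rep: "\<forall>x\<in>val_ring av. \<exists>!c\<in>C. av (x - c) < 1" using L8[THEN conjunct2, THEN conjunct2, THEN conjunct2, THEN conjunct2] .

lemma av_0[simp]: "av 0 = 0" using av_zero_iff by blast
lemma av_1[simp]: "av 1 = 1"
proof -
  have "av 1 = av 1 * av 1" using av_mult[of 1 1] by simp
  moreover have "av 1 \<noteq> 0" using av_zero_iff by simp
  ultimately show ?thesis by (metis mult_cancel_right1)
qed
lemma av_m1[simp]: "av (-1) = 1"
proof -
  have "av (-1) * av (-1) = 1" using av_mult[of "-1" "-1"] by simp
  moreover have "av (-1) \<ge> 0" by (rule av_nonneg)
  ultimately show ?thesis using power2_eq_1_iff[of "av (-1)"] by (simp add: power2_eq_square)
qed
lemma av_uminus[simp]: "av (- x) = av x"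
  using av_mult[of "-1" x] by simp
lemma av_minus_commute: "av (x - y) = av (y - x)"
  by (metis av_uminus minus_diff_eq)
lemma av_diff: "av (x - y) \<le> max (av x) (av y)"
  using av_ultra[of x "-y"] by simp
lemma av_inverse: "av (inverse x) = inverse (av x)"
proof (cases "x = 0")
  case True then show ?thesis by simp
next
  case False
  then have "av x * av (inverse x) = 1" using av_mult[of x "inverse x"] by simp
  then show ?thesis by (metis inverse_unique)
qed
lemma av_divide: "av (x / y) = av x / av y"
  by (simp add: divide_inverse av_mult av_inverse)
lemma av_power: "av (x ^ n) = av x ^ n"
  by (induction n) (simp_all add: av_mult)
lemma av_powi: "av (x powi n) = av x powi n"
  by (cases "n \<ge> 0") (auto simp: power_int_def av_power av_inverse power_inverse)

lemma q_pos: "real q > 0" using q2 by simp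
lemma q_gt1: "real q > 1" using q2 by simp

lemma av_strict: assumes "av y < av x" shows "av (x + y) = av x"
proof -
  have a: "av (x + y) \<le> av x" using av_ultra[of x y] assms by simp
  have "av x \<le> max (av (x + y)) (av y)" using av_diff[of "x + y" y] by simp
  then show ?thesis using a assms by linarith
qed

lemma av_sum_le: assumes "\<And>i. i \<in> I \<Longrightarrow> av (f i) \<le> b" "b \<ge> 0" shows "av (sum f I) \<le> b"
  using assms
proof (induction I rule: infinite_finite_induct)
  case (insert x F)
  then have "av (f x) \<le> b" "av (sum f F) \<le> b" by auto
  then show ?case using av_ultra[of "f x" "sum f F"] insert(1,2) by simp
qed auto

lemma av_discrete: assumes "av x < real q powr (real_of_int m + 1)" shows "av x \<le> real q powr real_of_int m"
proof (cases "x = 0")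
  case True then show ?thesis by simp
next
  case False
  then obtain k where k: "av x = real q powr real_of_int k" using av_group by blast
  then have "k < m + 1" using assms q_gt1 by simp
  then have "k \<le> m" by simp
  then show ?thesis using k q_gt1 by simp
qed

lemma av_lt1: "av x < 1 \<Longrightarrow> av x \<le> 1 / real q"
  using av_discrete[of x "-1"] q_pos by (simp add: powr_minus divide_inverse)

lemma av_prm_powi: "av (prm powi n) = real q powr (- real_of_int n)"
proof -
  have "av (prm powi n) = (inverse (real q)) powi n" by (simp add: av_powi av_prm divide_inverse)
  also have "\<dots> = real q powi (-n)" by (simp add: power_int_minus power_int_inverse)
  also have "\<dots> = real q powr real_of_int (-n)" using q_pos powr_real_of_int'[of "real q" "-n"] by simp
  finally show ?thesis by simp
qed

end

fun vl :: "'a::field \<Rightarrow> int \<Rightarrow> 'a list \<Rightarrow> 'a" where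
  "vl p e [] = 0"
| "vl p e (c # ds) = c * p powi e + vl p (e + 1) ds"

lemma vl_append: "vl p e (xs @ ys) = vl p e xs + vl p (e + int (length xs)) ys"
  by (induction xs arbitrary: e) (simp_all add: algebra_simps)

lemma vl_sum: "vl p e xs = (\<Sum>i<length xs. xs ! i * p powi (e + int i))"
proof (induction xs arbitrary: e)
  case Nil then show ?case by simp
next
  case (Cons c xs)
  have "(\<Sum>i<length (c # xs). (c # xs) ! i * p powi (e + int i))
      = c * p powi e + (\<Sum>i<length xs. xs ! i * p powi (e + int (Suc i)))"
    by (subst length_Cons, subst sum.lessThan_Suc_shift) simp
  also have "\<dots> = c * p powi e + vl p (e + 1) xs" using Cons[of "e+1"] by (simp add: algebra_simps)
  finally show ?case by simp
qed

lemma vl_replicate0: "vl p (e - int P) (replicate P 0 @ ds) = vl p e ds"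
proof (induction P)
  case (Suc P)
  have "vl p (e - int (Suc P)) (replicate (Suc P) 0 @ ds) = vl p (e - int P) (replicate P 0 @ ds)"
    by (simp add: algebra_simps)
  then show ?case using Suc by simp
qed simp

context nalf
begin

definition Q :: "int \<Rightarrow> real" where "Q K = real q powr real_of_int K"
abbreviation val where "val \<equiv> vl prm"
definition LS :: "nat \<Rightarrow> 'a list set" where "LS n = {ds. set ds \<subseteq> C \<and> length ds = n}"

lemma Q_add: "Q (a + b) = Q a * Q b" by (simp add: powr_add Q_def)
lemma Q_pos[simp]: "Q a > 0" using q_pos by (simp add: Q_def)
lemma Q_less_iff[simp]: "Q a < Q b \<longleftrightarrow> a < b" using q_gt1 by (simp add: Q_def)
lemma Q_le_iff[simp]: "Q a \<le> Q b \<longleftrightarrow> a \<le> b" using q_gt1 by (simp add: Q_def)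
lemma Q_0[simp]: "Q 0 = 1" using q_pos by (simp add: Q_def)
lemma Q_nonneg[simp]: "0 \<le> Q a" using Q_pos[of a] by linarith
lemma Q_inv: "Q (-a) * Q a = 1" by (simp flip: Q_add)
lemma Q_le1[simp]: "Q a \<le> 1 \<longleftrightarrow> a \<le> 0" using Q_le_iff[of a 0] by (simp del: Q_le_iff)
lemma Q_ge1[simp]: "1 \<le> Q a \<longleftrightarrow> 0 \<le> a" using Q_le_iff[of 0 a] by (simp del: Q_le_iff)
lemma Q_lt1[simp]: "Q a < 1 \<longleftrightarrow> a < 0" using Q_less_iff[of a 0] by (simp del: Q_less_iff)

lemma av_prm_powi': "av (prm powi n) = Q (-n)" using av_prm_powi by (simp add: Q_def)
lemma prm_nz: "prm \<noteq> 0" using av_prm q_pos av_zero_iff by fastforce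

lemma C_av: "c \<in> C \<Longrightarrow> av c \<le> 1" using C_O by (auto simp: val_ring_def)

lemma C_diff: assumes "c \<in> C" "c' \<in> C" "c \<noteq> c'" shows "av (c - c') = 1"
proof -
  have le: "av (c - c') \<le> 1" using av_diff[of c c'] C_av[OF assms(1)] C_av[OF assms(2)] by simp
  have "c \<in> val_ring av" using assms C_O by auto
  then obtain c0 where "c0 \<in> C" "av (c - c0) < 1" "\<forall>y\<in>C. av (c - y) < 1 \<longrightarrow> y = c0"
    using C_rep by metis
  then have "\<not> av (c - c') < 1" using assms by (metis av_0 diff_self zero_less_one)
  then show ?thesis using le by simp
qed

lemma rep: assumes "av z \<le> 1" shows "\<exists>c\<in>C. av (z - c) \<le> Q (-1)"
proof -
  have "z \<in> val_ring av" using assms by (simp add: val_ring_def)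
  then obtain c where "c \<in> C" "av (z - c) < 1" using C_rep by metis
  then show ?thesis using av_lt1 q_pos by (auto simp: powr_minus divide_inverse Q_def)
qed

lemma V1: "set ds \<subseteq> C \<Longrightarrow> av (val e ds) \<le> Q (-e)"
proof (induction ds arbitrary: e)
  case Nil then show ?case by simp
next
  case (Cons c ds)
  have a: "av (c * prm powi e) \<le> Q (-e)"
    using Cons.prems C_av[of c] av_prm_powi'[of e] Q_pos[of "-e"] by (simp add: av_mult mult_le_cancel_right1)
  have "av (val (e + 1) ds) \<le> Q (-(e+1))" using Cons.IH[of "e+1"] Cons.prems by simp
  also have "\<dots> \<le> Q (-e)" by simp
  finally show ?case using a av_ultra[of "c * prm powi e" "val (e+1) ds"] by simp
qed

lemma E: assumes "av z \<le> Q (-e)"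
  shows "\<exists>ds. set ds \<subseteq> C \<and> length ds = K \<and> av (z - val e ds) \<le> Q (-(e + int K))"
  using assms
proof (induction K arbitrary: z e)
  case 0 then show ?case by simp
next
  case (Suc K)
  define w where "w = z * prm powi (-e)"
  have "av w = av z * Q e" by (simp add: w_def av_mult av_prm_powi')
  also have "\<dots> \<le> Q (-e) * Q e" using Suc.prems by (simp add: mult_right_mono)
  also have "\<dots> = 1" by (rule Q_inv)
  finally obtain c where c: "c \<in> C" "av (w - c) \<le> Q (-1)" using rep by blast
  have "z - c * prm powi e = (w - c) * prm powi e"
    using prm_nz by (simp add: w_def algebra_simps power_int_minus_mult flip: power_int_add)
  then have "av (z - c * prm powi e) = av (w - c) * Q (-e)" by (simp add: av_mult av_prm_powi')
  also have "\<dots> \<le> Q (-1) * Q (-e)" using c by (simp add: mult_right_mono)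
  also have "\<dots> = Q (-(e+1))" unfolding Q_add[symmetric] by (rule arg_cong[where f=Q]) simp
  finally obtain ds where ds: "set ds \<subseteq> C" "length ds = K"
    "av (z - c * prm powi e - val (e+1) ds) \<le> Q (-(e + 1 + int K))"
    using Suc.IH by blast
  show ?case
    by (rule exI[of _ "c # ds"]) (use ds c in \<open>auto simp: algebra_simps\<close>)
qed

lemma U: assumes "set ds \<subseteq> C" "set ds' \<subseteq> C" "length ds = length ds'"
  "av (val e ds - val e ds') \<le> Q (-(e + int (length ds)))"
  shows "ds = ds'"
  using assms
proof (induction ds arbitrary: ds' e)
  case Nil then show ?case by simp
next
  case (Cons c ds)
  then obtain c' ds2 where ds': "ds' = c' # ds2" by (cases ds') auto
  have cC: "c \<in> C" "c' \<in> C" "set ds \<subseteq> C" "set ds2 \<subseteq> C" "length ds = length ds2"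
    using Cons.prems ds' by auto
  have eq: "val e (c # ds) - val e ds' = (c - c') * prm powi e + (val (e+1) ds - val (e+1) ds2)"
    using ds' by (simp add: algebra_simps)
  have b2: "av (val (e+1) ds - val (e+1) ds2) \<le> Q (-(e+1))"
    using av_diff[of "val (e+1) ds" "val (e+1) ds2"] V1[OF cC(3), of "e+1"] V1[OF cC(4), of "e+1"] by simp
  have cc: "c = c'"
  proof (rule ccontr)
    assume "c \<noteq> c'"
    then have a1: "av ((c - c') * prm powi e) = Q (-e)" using C_diff cC by (simp add: av_mult av_prm_powi')
    have "Q (-(e+1)) < Q (-e)" by simp
    have "av (val (e+1) ds - val (e+1) ds2) < Q (-e)" using b2 by (rule le_less_trans) simp
    then have "av ((c - c') * prm powi e + (val (e+1) ds - val (e+1) ds2)) = Q (-e)"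
      using av_strict[of "val (e+1) ds - val (e+1) ds2" "(c - c') * prm powi e"] a1 b2 by simp
    then have "av (val e (c # ds) - val e ds') = Q (-e)" unfolding eq .
    moreover have "Q (-(e + int (length (c # ds)))) < Q (-e)" by simp
    ultimately show False using Cons.prems(4) by simp
  qed
  then have X: "val e (c # ds) - val e ds' = val (e+1) ds - val (e+1) ds2" using eq by simp
  have "av (val (e+1) ds - val (e+1) ds2) \<le> Q (-(e + int (length (c # ds))))"
    using Cons.prems(4) unfolding X .
  moreover have "-(e + int (length (c # ds))) = -(e + 1 + int (length ds))" by simp
  ultimately have "av (val (e+1) ds - val (e+1) ds2) \<le> Q (-(e + 1 + int (length ds)))" by metis
  then have "ds = ds2" using Cons.IH[of ds2 "e+1"] cC by simp
  then show ?case using cc ds' by simp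
qed

definition Fr :: "'a set" where
  "Fr = (\<Union>J. (\<lambda>ds. val (- int J) ds) ` LS J)"

lemma LS_fin: "finite (LS n)" unfolding LS_def using finite_lists_length_eq[OF C_fin] .
lemma LS_card: "card (LS n) = q ^ n" unfolding LS_def using card_lists_length_eq[OF C_fin] C_card by simp

lemma Fr_countable: "countable Fr"
  unfolding Fr_def by (rule countable_UN) (simp_all add: countable_finite LS_fin)

lemma Fr_0: "0 \<in> Fr" unfolding Fr_def LS_def by (rule UN_I[of 0]) auto

lemma FrE: "\<exists>r\<in>Fr. av (z - r) \<le> 1"
proof (cases "z = 0")
  case True then show ?thesis using Fr_0 by force
next
  case False
  then obtain k where k: "av z = Q k" using av_group unfolding Q_def by blast
  define J where "J = nat k"
  have "av z \<le> Q (- (- int J))" using k J_def by simp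
  from E[OF this, of J] obtain ds where "set ds \<subseteq> C" "length ds = J" "av (z - val (- int J) ds) \<le> 1"
    by auto
  then show ?thesis unfolding Fr_def LS_def by blast
qed

lemma FrU: assumes "r \<in> Fr" "r' \<in> Fr" "av (r - r') \<le> 1" shows "r = r'"
proof -
  obtain J ds where r: "r = val (- int J) ds" "set ds \<subseteq> C" "length ds = J"
    using assms(1) unfolding Fr_def LS_def by auto
  obtain J' ds' where r': "r' = val (- int J') ds'" "set ds' \<subseteq> C" "length ds' = J'"
    using assms(2) unfolding Fr_def LS_def by auto
  define M where "M = max J J'"
  define xs where "xs = replicate (M - J) 0 @ ds"
  define ys where "ys = replicate (M - J') 0 @ ds'"
  have rx: "r = val (- int M) xs"
    using vl_replicate0[of prm "- int J" "M - J" ds] r by (simp add: xs_def M_def of_nat_diff)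
  have ry: "r' = val (- int M) ys"
    using vl_replicate0[of prm "- int J'" "M - J'" ds'] r' by (simp add: ys_def M_def of_nat_diff)
  have lx: "length xs = M" "length ys = M" using r r' by (auto simp: xs_def ys_def M_def)
  have sx: "set xs \<subseteq> C" "set ys \<subseteq> C" using r r' C0 by (auto simp: xs_def ys_def)
  have "av (val (- int M) xs - val (- int M) ys) \<le> Q (-(- int M + int (length xs)))"
    using assms(3) rx ry lx by simp
  then have "xs = ys" using U[OF sx, of "- int M"] lx by simp
  then show ?thesis using rx ry by simp
qed

definition rFr :: "'a \<Rightarrow> 'a" where "rFr z = (SOME r. r \<in> Fr \<and> av (z - r) \<le> 1)"

lemma rFr: "rFr z \<in> Fr" "av (z - rFr z) \<le> 1"
  using someI_ex[OF FrE[of z, unfolded Bex_def]] unfolding rFr_def by auto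

lemma rFr_unique: "r \<in> Fr \<Longrightarrow> av (z - r) \<le> 1 \<Longrightarrow> rFr z = r"
  using FrU[of "rFr z" r] rFr[of z] av_diff[of "z - r" "z - rFr z"]
  by (simp add: algebra_simps)

end

context nalf
begin

lemma Q_tendsto0: "(\<lambda>N::nat. Q (- int N)) \<longlonglongrightarrow> 0"
proof -
  have "Q (- int N) = inverse (real q ^ N)" for N
    using q_pos by (simp add: Q_def powr_minus powr_realpow)
  then show ?thesis using LIMSEQ_inverse_realpow_zero[OF q_gt1] by simp
qed

definition dsq :: "'a \<Rightarrow> nat \<Rightarrow> 'a list" where
  "dsq y N = (SOME ds. set ds \<subseteq> C \<and> length ds = N \<and> av (y - val 0 ds) \<le> Q (- int N))"

lemma dsq: assumes "av y \<le> 1"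
  shows "set (dsq y N) \<subseteq> C" "length (dsq y N) = N" "av (y - val 0 (dsq y N)) \<le> Q (- int N)"
proof -
  have "av y \<le> Q (- 0)" using assms by simp
  from E[OF this, of N] have "\<exists>ds. set ds \<subseteq> C \<and> length ds = N \<and> av (y - val 0 ds) \<le> Q (- int N)"
    by simp
  from someI_ex[OF this] show "set (dsq y N) \<subseteq> C" "length (dsq y N) = N"
    "av (y - val 0 (dsq y N)) \<le> Q (- int N)" unfolding dsq_def by auto
qed

lemma dsq_take: assumes "av y \<le> 1" "N \<le> M" shows "take N (dsq y M) = dsq y N"
proof -
  define D where "D = dsq y M"
  define T where "T = take N D"
  define R where "R = drop N D"
  have D: "set D \<subseteq> C" "length D = M" "av (y - val 0 D) \<le> Q (- int M)"
    using dsq[OF assms(1)] D_def by auto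
  have lT: "length T = N" using D assms T_def by simp
  have sT: "set T \<subseteq> C" "set R \<subseteq> C" using D T_def R_def by (auto dest: in_set_takeD in_set_dropD)
  have "val 0 D = val 0 T + val (int N) R" using vl_append[of prm 0 T R] lT
    by (simp add: T_def R_def)
  then have eq: "y - val 0 T = (y - val 0 D) + val (int N) R" by (simp add: algebra_simps)
  have "av (val (int N) R) \<le> Q (- int N)" using V1[OF sT(2)] by simp
  moreover have "av (y - val 0 D) \<le> Q (- int N)" using D(3) by (rule order_trans) (simp add: assms(2))
  ultimately have a1: "av (y - val 0 T) \<le> Q (- int N)" using av_ultra eq by (metis max.bounded_iff order_trans)
  have a2: "av (y - val 0 (dsq y N)) \<le> Q (- int N)" using dsq[OF assms(1)] by simp
  have "val 0 T - val 0 (dsq y N) = (y - val 0 (dsq y N)) - (y - val 0 T)" by simp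
  then have "av (val 0 T - val 0 (dsq y N)) \<le> Q (- int N)"
    using av_diff[of "y - val 0 (dsq y N)" "y - val 0 T"] a1 a2 by simp
  then have "T = dsq y N" using U[OF sT(1) dsq(1)[OF assms(1), of N], of 0] lT dsq(2)[OF assms(1), of N] by simp
  then show ?thesis by (simp add: T_def D_def)
qed

definition dig :: "'a \<Rightarrow> nat \<Rightarrow> 'a" where "dig y n = dsq y (Suc n) ! n"

lemma dig_nth: assumes "av y \<le> 1" "n < N" shows "dig y n = dsq y N ! n"
proof -
  have "dsq y (Suc n) = take (Suc n) (dsq y N)" using dsq_take[OF assms(1), of "Suc n" N] assms by simp
  then show ?thesis using assms by (simp add: dig_def)
qed

lemma dig_C: assumes "av y \<le> 1" shows "dig y n \<in> C"
  using dsq[OF assms, of "Suc n"] unfolding dig_def by (auto simp: set_conv_nth)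

lemma dig_sum: assumes "av y \<le> 1"
  shows "(\<Sum>n<N. dig y n * prm ^ n) = val 0 (dsq y N)"
  unfolding vl_sum dsq(2)[OF assms] using dig_nth[OF assms]
  by (intro sum.cong) (auto simp: power_int_def)

lemma neg_sum:
  assumes "\<And>n. n < 0 \<Longrightarrow> c n \<noteq> 0 \<Longrightarrow> - int J \<le> n"
  shows "(\<Sum>n\<in>{n. n < 0 \<and> c n \<noteq> 0}. c n * inverse prm ^ nat (- n))
       = val (- int J) (map (\<lambda>i. c (int i - int J)) [0..<J])"
proof -
  let ?f = "\<lambda>n. c n * inverse prm ^ nat (- n)"
  have "(\<Sum>n\<in>{n. n < 0 \<and> c n \<noteq> 0}. ?f n) = (\<Sum>n\<in>{n. - int J \<le> n \<and> n < 0}. ?f n)"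
    by (rule sum.mono_neutral_left) (use assms in auto)
  also have "\<dots> = (\<Sum>i<J. c (int i - int J) * prm powi (- int J + int i))"
  proof (rule sum.reindex_cong[of "\<lambda>i. int i - int J"])
    show "inj_on (\<lambda>i. int i - int J) {..<J}" by (auto simp: inj_on_def)
    show "{n. - int J \<le> n \<and> n < 0} = (\<lambda>i. int i - int J) ` {..<J}"
    proof safe
      fix n assume "- int J \<le> n" "n < 0"
      then show "n \<in> (\<lambda>i. int i - int J) ` {..<J}"
        by (intro image_eqI[of _ _ "nat (n + int J)"]) auto
    qed auto
    fix i assume "i \<in> {..<J}"
    then show "?f (int i - int J) = c (int i - int J) * prm powi (- int J + int i)"
      by (simp add: power_int_def)
  qed
  also have "\<dots> = val (- int J) (map (\<lambda>i. c (int i - int J)) [0..<J])"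
    by (simp add: vl_sum)
  finally show ?thesis .
qed

lemma int_part_eq: "int_part av prm C x = x - rFr x"
  unfolding int_part_def
proof (rule the_equality)
  define y where "y = x - rFr x"
  have ay: "av y \<le> 1" using rFr(2) y_def by simp
  obtain J ds where r: "rFr x = val (- int J) ds" "set ds \<subseteq> C" "length ds = J"
    using rFr(1)[of x] unfolding Fr_def LS_def by auto
  define c where "c n = (if 0 \<le> n then dig y (nat n) else if - int J \<le> n then ds ! nat (n + int J) else 0)" for n
  have dsC: "ds ! i \<in> C" if "i < J" for i using r that nth_mem by blast
  have cC: "c n \<in> C" for n
    using dig_C[OF ay] dsC[of "nat (n + int J)"] C0 unfolding c_def by auto
  have bnd: "- int J \<le> n" if "n < 0" "c n \<noteq> 0" for n using that unfolding c_def by (auto split: if_splits)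
  then have fin: "finite {n. n < 0 \<and> c n \<noteq> 0}"
    by (intro finite_subset[OF _ finite_interval_int2[of "- int J" 0]]) auto
  have "map (\<lambda>i. c (int i - int J)) [0..<J] = ds"
    by (rule nth_equalityI) (auto simp: c_def r(3))
  then have negs: "(\<Sum>n\<in>{n. n < 0 \<and> c n \<noteq> 0}. c n * inverse prm ^ nat (- n)) = rFr x"
    using neg_sum[of c J, OF bnd] r(1) by simp
  have lim: "(\<lambda>N. av ((\<Sum>n<N. c (int n) * prm ^ n) - y)) \<longlonglongrightarrow> 0"
  proof (rule tendsto_sandwich[OF _ _ tendsto_const Q_tendsto0])
    show "\<forall>\<^sub>F N in sequentially. 0 \<le> av ((\<Sum>n<N. c (int n) * prm ^ n) - y)" by (simp add: av_nonneg)
    have "(\<Sum>n<N. c (int n) * prm ^ n) = val 0 (dsq y N)" for N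
      using dig_sum[OF ay, of N] by (simp add: c_def)
    then show "\<forall>\<^sub>F N in sequentially. av ((\<Sum>n<N. c (int n) * prm ^ n) - y) \<le> Q (- int N)"
      using dsq(3)[OF ay] by (simp add: av_minus_commute)
  qed
  show "\<exists>c. (\<forall>n. c n \<in> C) \<and> finite {n. n < 0 \<and> c n \<noteq> 0} \<and>
      (\<lambda>N. av ((\<Sum>n<N. c (int n) * prm ^ n) - (x - rFr x))) \<longlonglongrightarrow> 0 \<and>
      x = x - rFr x + (\<Sum>n\<in>{n. n < 0 \<and> c n \<noteq> 0}. c n * inverse prm ^ nat (- n))"
    using cC fin lim negs y_def by (intro exI[of _ c]) auto
next
  fix y
  assume "\<exists>c. (\<forall>n. c n \<in> C) \<and> finite {n. n < 0 \<and> c n \<noteq> 0} \<and>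
      (\<lambda>N. av ((\<Sum>n<N. c (int n) * prm ^ n) - y)) \<longlonglongrightarrow> 0 \<and>
      x = y + (\<Sum>n\<in>{n. n < 0 \<and> c n \<noteq> 0}. c n * inverse prm ^ nat (- n))"
  then obtain c where cC: "\<And>n. c n \<in> C" and fin: "finite {n. n < 0 \<and> c n \<noteq> 0}"
    and lim: "(\<lambda>N. av ((\<Sum>n<N. c (int n) * prm ^ n) - y)) \<longlonglongrightarrow> 0"
    and xeq: "x = y + (\<Sum>n\<in>{n. n < 0 \<and> c n \<noteq> 0}. c n * inverse prm ^ nat (- n))" by blast
  define S where "S = {n. n < 0 \<and> c n \<noteq> 0}"
  define J where "J = (if S = {} then 0 else nat (- Min S))"
  have bnd: "- int J \<le> n" if "n < 0" "c n \<noteq> 0" for n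
  proof -
    have "n \<in> S" using that S_def by simp
    then have "Min S \<le> n" "S \<noteq> {}" using fin S_def by auto
    then show ?thesis using J_def by simp
  qed
  define fr where "fr = (\<Sum>n\<in>{n. n < 0 \<and> c n \<noteq> 0}. c n * inverse prm ^ nat (- n))"
  have frv: "fr = val (- int J) (map (\<lambda>i. c (int i - int J)) [0..<J])"
    unfolding fr_def by (rule neg_sum) (rule bnd)
  have frF: "fr \<in> Fr" unfolding frv Fr_def LS_def using cC by (intro UN_I[of J] image_eqI[OF refl]) auto
  obtain N where N: "av ((\<Sum>n<N. c (int n) * prm ^ n) - y) < 1"
    using order_tendstoD(2)[OF lim, of 1] by (auto simp: eventually_sequentially)
  have "av (\<Sum>n<N. c (int n) * prm ^ n) \<le> 1"
  proof (rule av_sum_le)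
    fix n
    have "av (prm ^ n) \<le> 1" using av_prm q_gt1 by (simp add: av_power power_le_one)
    then show "av (c (int n) * prm ^ n) \<le> 1"
      using C_av[OF cC[of "int n"]] av_nonneg by (simp add: av_mult mult_le_one)
  qed simp
  then have "av y \<le> 1" using av_diff[of "\<Sum>n<N. c (int n) * prm ^ n" "(\<Sum>n<N. c (int n) * prm ^ n) - y"] N
    by simp
  then have "av (x - fr) \<le> 1" using xeq fr_def by simp
  then have "rFr x = fr" using rFr_unique frF by blast
  then show "y = x - rFr x" using xeq fr_def by simp
qed

lemma int_part_O: "int_part av prm C z \<in> val_ring av"
  using rFr(2) by (simp add: int_part_eq val_ring_def)

definition Gd :: "'a \<Rightarrow> nat \<Rightarrow> 'a set" where
  "Gd a k = {z. \<exists>r\<in>Fr. av (z - a - r) \<le> Q (- int k)}"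

lemma int_part_disc: assumes "av a \<le> 1"
  shows "int_part av prm C z \<in> disc av a (real q powr (- real k)) \<longleftrightarrow> z \<in> Gd a k"
proof -
  have qq: "real q powr (- real k) = Q (- int k)" by (simp add: Q_def)
  show ?thesis
  proof
    assume "int_part av prm C z \<in> disc av a (real q powr (- real k))"
    then show "z \<in> Gd a k" using rFr(1)[of z] unfolding Gd_def disc_def qq int_part_eq
      by (auto simp: algebra_simps)
  next
    assume "z \<in> Gd a k"
    then obtain r where r: "r \<in> Fr" "av (z - a - r) \<le> Q (- int k)" unfolding Gd_def by auto
    have "av (z - a - r) \<le> 1" using r(2) by (rule order_trans) simp
    then have "av (z - r) \<le> 1" using av_ultra[of "z - a - r" a] assms by simp
    then have "rFr z = r" using rFr_unique r by blast
    then show "int_part av prm C z \<in> disc av a (real q powr (- real k))"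
      using r unfolding disc_def qq int_part_eq by (simp add: algebra_simps)
  qed
qed

lemma LS_Suc_card: "card {ds \<in> LS (Suc n). P ds} = (\<Sum>c\<in>C. card {ds \<in> LS n. P (c # ds)})"
proof -
  have "{ds \<in> LS (Suc n). P ds} = (\<lambda>(c, ds). c # ds) ` (SIGMA c:C. {ds \<in> LS n. P (c # ds)})"
  proof safe
    fix ds assume "ds \<in> LS (Suc n)" "P ds"
    then obtain c ds' where "ds = c # ds'" by (cases ds) (auto simp: LS_def)
    then show "ds \<in> (\<lambda>(c, ds). c # ds) ` (SIGMA c:C. {ds \<in> LS n. P (c # ds)})"
      using \<open>ds \<in> LS (Suc n)\<close> \<open>P ds\<close> by (auto simp: LS_def image_iff)
  qed (auto simp: LS_def)
  moreover have "inj_on (\<lambda>(c, ds). c # ds) (SIGMA c:C. {ds \<in> LS n. P (c # ds)})"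
    by (auto simp: inj_on_def)
  ultimately have "card {ds \<in> LS (Suc n). P ds} = card (SIGMA c:C. {ds \<in> LS n. P (c # ds)})"
    by (simp add: card_image)
  also have "\<dots> = (\<Sum>c\<in>C. card {ds \<in> LS n. P (c # ds)})"
    using C_fin LS_fin by simp
  finally show ?thesis .
qed

lemma count0: assumes "av a \<le> 1" shows "card {ds \<in> LS k. y + val 0 ds \<in> Gd a k} = 1"
proof -
  define r where "r = rFr (y - a)"
  have r: "r \<in> Fr" "av (y - a - r) \<le> 1" using rFr r_def by auto
  have "av (- (y - a - r)) \<le> Q (- 0)" using r(2) by (simp only: av_uminus minus_zero Q_0)
  from E[OF this, of k] obtain ds0 where ds0: "set ds0 \<subseteq> C" "length ds0 = k"
    "av (- (y - a - r) - val 0 ds0) \<le> Q (- int k)" by auto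
  have in0: "y + val 0 ds0 - a - r = - (- (y - a - r) - val 0 ds0)" by simp
  have "av (y + val 0 ds0 - a - r) \<le> Q (- int k)" unfolding in0 av_uminus by (rule ds0(3))
  then have mem: "ds0 \<in> {ds \<in> LS k. y + val 0 ds \<in> Gd a k}"
    using ds0 r unfolding LS_def Gd_def by blast
  have "ds = ds0" if "ds \<in> {ds \<in> LS k. y + val 0 ds \<in> Gd a k}" for ds
  proof -
    from that obtain r' where ds: "set ds \<subseteq> C" "length ds = k" "r' \<in> Fr"
      "av (y + val 0 ds - a - r') \<le> Q (- int k)" unfolding LS_def Gd_def by auto
    have "av (y + val 0 ds - a - r') \<le> 1" using ds(4) by (rule order_trans) simp
    moreover have "av (val 0 ds) \<le> 1" using V1[OF ds(1), of 0] by simp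
    ultimately have "av (y - a - r') \<le> 1"
      using av_diff[of "y + val 0 ds - a - r'" "val 0 ds"] by (simp add: algebra_simps)
    then have "r' = r" using rFr_unique[OF ds(3)] r_def by simp
    have b0: "av (y + val 0 ds0 - a - r) \<le> Q (- int k)" unfolding in0 av_uminus by (rule ds0(3))
    have "val 0 ds - val 0 ds0 = (y + val 0 ds - a - r') - (y + val 0 ds0 - a - r)"
      using \<open>r' = r\<close> by simp
    then have "av (val 0 ds - val 0 ds0) \<le> Q (- int k)"
      using av_diff[of "y + val 0 ds - a - r'" "y + val 0 ds0 - a - r"] ds(4) b0
      by simp
    then show "ds = ds0" using U[OF ds(1) ds0(1), of 0] ds ds0 by simp
  qed
  then have "{ds \<in> LS k. y + val 0 ds \<in> Gd a k} = {ds0}" using mem by blast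
  then show ?thesis by simp
qed

lemma count: assumes "av a \<le> 1"
  shows "card {ds \<in> LS (j + k). y + val (- int j) ds \<in> Gd a k} = q ^ j"
proof (induction j arbitrary: y)
  case 0 then show ?case using count0[OF assms] by simp
next
  case (Suc j)
  have "card {ds \<in> LS (Suc j + k). y + val (- int (Suc j)) ds \<in> Gd a k}
      = (\<Sum>c\<in>C. card {ds \<in> LS (j + k). y + val (- int (Suc j)) (c # ds) \<in> Gd a k})"
    using LS_Suc_card by simp
  also have "\<dots> = (\<Sum>c\<in>C. card {ds \<in> LS (j + k). (y + c * prm powi (- int (Suc j))) + val (- int j) ds \<in> Gd a k})"
    by (simp add: algebra_simps)
  also have "\<dots> = (\<Sum>c\<in>C. q ^ j)" using Suc by simp
  also have "\<dots> = q ^ Suc j" using C_card by simp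
  finally show ?case .
qed

end

locale haarctx = nalf av q prm C for av :: "'a::field \<Rightarrow> real" and q prm C +
  fixes M :: "'a measure" and beta :: 'a
  assumes haar: "haar_measure av M" and beta: "av beta > 1"
begin

lemma space_M[simp]: "space M = UNIV" using haar unfolding haar_measure_def by blast
lemma sets_M: "sets M = sigma_sets UNIV {disc av a r | a r. True}" using haar unfolding haar_measure_def by blast
lemma M_transl: "A \<in> sets M \<Longrightarrow> emeasure M ((+) a ` A) = emeasure M A" using haar unfolding haar_measure_def by blast
lemma M_O: "0 < emeasure M (val_ring av)" "emeasure M (val_ring av) < \<infinity>" using haar unfolding haar_measure_def by blast+

lemma disc_sets[measurable]: "disc av c r \<in> sets M"
  unfolding sets_M by (rule sigma_sets.Basic) blast

lemma beta_nz: "beta \<noteq> 0" using beta by auto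

lemma transl_meas: "(\<lambda>x. x + t) \<in> measurable M M"
proof (rule measurable_sigma_sets[OF sets_M])
  show "{disc av a r |a r. True} \<subseteq> Pow UNIV" by simp
  show "(\<lambda>x. x + t) \<in> space M \<rightarrow> UNIV" by simp
  fix y assume "y \<in> {disc av a r |a r. True}"
  then obtain c r where y: "y = disc av c r" by blast
  have "(\<lambda>x. x + t) -` y \<inter> space M = disc av (c - t) r" unfolding y disc_def by (auto simp: algebra_simps)
  then show "(\<lambda>x. x + t) -` y \<inter> space M \<in> sets M" by simp
qed

lemma distr_transl: "distr M M (\<lambda>x. x + t) = M"
proof (rule measure_eqI)
  show "sets (distr M M (\<lambda>x. x + t)) = sets M" by simp
  fix A assume A: "A \<in> sets (distr M M (\<lambda>x. x + t))"
  then have A': "A \<in> sets M" by simp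
  have "(\<lambda>x. x + t) -` A \<inter> space M = (+) (- t) ` A"
    by (auto simp: image_iff algebra_simps intro!: exI[of _ "_ + t"])
  note eq = this
  have "emeasure (distr M M (\<lambda>x. x + t)) A = emeasure M ((\<lambda>x. x + t) -` A \<inter> space M)"
    by (rule emeasure_distr[OF transl_meas A'])
  also have "\<dots> = emeasure M ((+) (- t) ` A)" by (simp only: eq)
  also have "\<dots> = emeasure M A" by (rule M_transl[OF A'])
  finally show "emeasure (distr M M (\<lambda>x. x + t)) A = emeasure M A" .
qed

lemma integral_transl:
  fixes f :: "'a \<Rightarrow> real"
  assumes "f \<in> borel_measurable M"
  shows "integral\<^sup>L M (\<lambda>x. f (x + t)) = integral\<^sup>L M f"
  using integral_distr[OF transl_meas assms, of t] distr_transl by simp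

definition B :: "'a \<Rightarrow> 'a set" where "B b = disc av b 1"

lemma B_sets[measurable]: "B b \<in> sets M" unfolding B_def by simp

lemma B_fin: "emeasure M (B b) < \<infinity>"
proof -
  have O: "val_ring av = disc av 0 1" by (simp add: val_ring_def disc_def)
  have "B b = (+) b ` val_ring av"
    by (auto simp: B_def disc_def val_ring_def image_iff intro!: exI[of _ "_ - b"])
  then have "emeasure M (B b) = emeasure M (val_ring av)" using M_transl[of "val_ring av" b] O by simp
  then show ?thesis using M_O by simp
qed

lemma B_shift: "av t \<le> 1 \<Longrightarrow> x + t \<in> B b \<longleftrightarrow> x \<in> B b"
  unfolding B_def disc_def
  using av_ultra[of "x + t - b" "- t"] av_ultra[of "x - b" t] by (auto simp: algebra_simps)

lemma Gd_shift: assumes "av u \<le> Q (- int k)" shows "z + u \<in> Gd a k \<longleftrightarrow> z \<in> Gd a k"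
proof -
  have "av (z + u - a - r) \<le> Q (- int k) \<longleftrightarrow> av (z - a - r) \<le> Q (- int k)" for r
  proof
    assume "av (z + u - a - r) \<le> Q (- int k)"
    then show "av (z - a - r) \<le> Q (- int k)" using av_diff[of "z + u - a - r" u] assms
      by (simp add: algebra_simps)
  next
    assume "av (z - a - r) \<le> Q (- int k)"
    then show "av (z + u - a - r) \<le> Q (- int k)" using av_ultra[of "z - a - r" u] assms
      by (simp add: algebra_simps)
  qed
  then show ?thesis unfolding Gd_def by simp
qed

lemma Gd_cong: assumes "av (a - a') \<le> Q (- int k)" shows "Gd a k = Gd a' k"
proof -
  have "av (z - a - r) \<le> Q (- int k) \<longleftrightarrow> av (z - a' - r) \<le> Q (- int k)" for z r
  proof -
    have e1: "z - a' - r = (z - a - r) + (a - a')" by simp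
    have e2: "z - a - r = (z - a' - r) - (a - a')" by simp
    show ?thesis
      using av_ultra[of "z - a - r" "a - a'"] av_diff[of "z - a' - r" "a - a'"] assms
      unfolding e1[symmetric] e2[symmetric] by auto
  qed
  then show ?thesis unfolding Gd_def by simp
qed

lemma Gd_UN: "Gd a k = (\<Union>r\<in>Fr. disc av (a + r) (Q (- int k)))"
  unfolding Gd_def disc_def by (auto simp: algebra_simps)

lemma pre_disc: "{x. beta ^ n * x \<in> disc av c \<rho>} = disc av (c / beta ^ n) (\<rho> / av beta ^ n)"
proof -
  have bp: "av beta ^ n > 0" using beta by simp
  have "beta ^ n * x - c = beta ^ n * (x - c / beta ^ n)" for x using beta_nz by (simp add: algebra_simps)
  then have "av (beta ^ n * x - c) = av beta ^ n * av (x - c / beta ^ n)" for x by (simp add: av_mult av_power)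
  then show ?thesis unfolding disc_def using bp by (auto simp: field_simps)
qed

lemma pre_Gd[measurable]: "{x. beta ^ n * x \<in> Gd a k} \<in> sets M"
proof -
  have "{x. beta ^ n * x \<in> Gd a k} = (\<Union>r\<in>Fr. {x. beta ^ n * x \<in> disc av (a + r) (Q (- int k))})"
    unfolding Gd_UN by auto
  also have "\<dots> \<in> sets M" unfolding pre_disc
    by (rule sets.countable_UN'') (auto intro: Fr_countable)
  finally show ?thesis .
qed

definition h :: "'a \<Rightarrow> nat \<Rightarrow> nat \<Rightarrow> 'a \<Rightarrow> real" where
  "h a k n x = indicator (Gd a k) (beta ^ n * x) - Q (- int k)"

lemma h_meas[measurable]: "h a k n \<in> borel_measurable M"
proof -
  have "h a k n = (\<lambda>x. indicator {x. beta ^ n * x \<in> Gd a k} x - Q (- int k))"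
    by (auto simp: h_def indicator_def)
  then show ?thesis by simp
qed

lemma h_bound: "\<bar>h a k n x\<bar> \<le> 1"
proof -
  have "Q (- int k) \<le> 1" "0 < Q (- int k)" by simp_all
  then show ?thesis unfolding h_def indicator_def by auto
qed

end

context haarctx
begin

lemma Q_pow: "Q a ^ n = Q (a * int n)"
  by (induction n) (simp_all add: Q_add[symmetric] algebra_simps)

definition sb :: int where "sb = (SOME s. av beta = Q s)"

lemma sb: "av beta = Q sb" "1 \<le> sb"
proof -
  obtain s where "av beta = Q s" using av_group[OF beta_nz] unfolding Q_def by blast
  then show b: "av beta = Q sb" unfolding sb_def by (rule someI)
  then have "Q 0 < Q sb" using beta by simp
  then have "0 < sb" by (simp only: Q_less_iff)
  then show "1 \<le> sb" by simp
qed

lemma av_beta_pow: "av (beta ^ n) = Q (sb * int n)"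
  using sb(1) by (simp add: av_power Q_pow mult.commute)

lemma av_ibeta_pow: "av (inverse beta ^ n) = Q (- sb * int n)"
proof -
  have "av (inverse beta ^ n) = inverse (Q sb) ^ n" by (simp add: av_power av_inverse sb(1))
  also have "inverse (Q sb) = Q (- sb)" using Q_inv[of sb] by (metis inverse_unique mult.commute)
  finally show ?thesis by (simp add: Q_pow)
qed

lemma Q_minus_nat: "Q (- int k) * real q ^ k = 1"
  using q_pos by (simp add: Q_def powr_minus powr_realpow)

lemma orth:
  assumes a: "av a \<le> 1" and nm: "n + k \<le> m"
  shows "integral\<^sup>L M (\<lambda>x. indicator (B b) x * h a k n x * h a k m x) = 0"
proof -
  have "int m - int n \<ge> int k" using nm by simp
  moreover have "(int m - int n) * 1 \<le> (int m - int n) * sb"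
    using sb(2) nm by (intro mult_left_mono) auto
  ultimately have jpos: "(int m - int n) * sb - int k \<ge> 0" by simp
  define j where "j = nat ((int m - int n) * sb - int k)"
  have j: "int j = (int m - int n) * sb - int k" using jpos j_def by simp
  define L where "L = LS (j + k)"
  define t where "t ds = inverse beta ^ m * val (- int j) ds" for ds
  define F where "F x = indicator (B b) x * h a k n x * h a k m x" for x
  have Fm[measurable]: "F \<in> borel_measurable M" unfolding F_def by measurable
  have avv: "av (val (- int j) ds) \<le> Q (int j)" if "ds \<in> L" for ds
    using V1[of ds "- int j"] that by (simp add: L_def LS_def)
  have t1: "av (t ds) \<le> 1" if "ds \<in> L" for ds
  proof -
    have "av (t ds) = Q (- sb * int m) * av (val (- int j) ds)" by (simp add: t_def av_mult av_ibeta_pow)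
    also have "\<dots> \<le> Q (- sb * int m) * Q (int j)" using avv[OF that] by (simp add: mult_left_mono)
    also have "\<dots> = Q (- sb * int m + int j)" by (simp only: Q_add)
    also have "\<dots> \<le> 1"
    proof -
      have "0 \<le> int n * sb" using sb(2) by simp
      then show ?thesis using j by (simp add: algebra_simps)
    qed
    finally show ?thesis .
  qed
  have t2: "av (beta ^ n * t ds) \<le> Q (- int k)" if "ds \<in> L" for ds
  proof -
    have "beta ^ n * inverse beta ^ m = inverse beta ^ (m - n)"
      using nm beta_nz by (simp add: power_inverse power_diff field_simps)
    then have "beta ^ n * t ds = inverse beta ^ (m - n) * val (- int j) ds" by (simp add: t_def mult.assoc[symmetric])
    then have "av (beta ^ n * t ds) = Q (- sb * int (m - n)) * av (val (- int j) ds)"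
      by (simp add: av_mult av_ibeta_pow)
    also have "\<dots> \<le> Q (- sb * int (m - n)) * Q (int j)" using avv[OF that] by (simp add: mult_left_mono)
    also have "\<dots> = Q (- sb * int (m - n) + int j)" by (simp only: Q_add)
    also have "- sb * int (m - n) + int j = - int k" using j nm by (simp add: of_nat_diff algebra_simps)
    finally show ?thesis .
  qed
  have Fshift: "F (x + t ds) = indicator (B b) x * h a k n x * h a k m (x + t ds)" if "ds \<in> L" for ds x
  proof -
    have "indicator (B b) (x + t ds) = (indicator (B b) x :: real)"
      using B_shift[OF t1[OF that]] by (simp add: indicator_def)
    moreover have "h a k n (x + t ds) = h a k n x"
      using Gd_shift[OF t2[OF that], of "beta ^ n * x" a] by (simp add: h_def distrib_left indicator_def)
    ultimately show ?thesis by (simp add: F_def)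
  qed
  have sum0: "(\<Sum>ds\<in>L. h a k m (x + t ds)) = 0" for x
  proof -
    have bm: "beta ^ m * (x + t ds) = beta ^ m * x + val (- int j) ds" for ds
      using beta_nz by (simp add: t_def distrib_left mult.assoc[symmetric] power_inverse[symmetric]
          flip: power_mult_distrib)
    have "(\<Sum>ds\<in>L. h a k m (x + t ds))
        = (\<Sum>ds\<in>L. indicator (Gd a k) (beta ^ m * x + val (- int j) ds)) - real (card L) * Q (- int k)"
      by (simp add: h_def bm sum_subtractf)
    also have "(\<Sum>ds\<in>L. indicator (Gd a k) (beta ^ m * x + val (- int j) ds) :: real)
        = real (card {ds \<in> L. beta ^ m * x + val (- int j) ds \<in> Gd a k})"
      using LS_fin[of "j + k"] unfolding L_def
      by (simp add: indicator_def sum.If_cases Int_def)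
    also have "card {ds \<in> L. beta ^ m * x + val (- int j) ds \<in> Gd a k} = q ^ j"
      unfolding L_def by (rule count[OF a])
    also have "card L = q ^ (j + k)" by (simp add: L_def LS_card)
    finally show ?thesis using Q_minus_nat[of k] by (simp add: power_add algebra_simps)
  qed
  have intF: "integrable M F"
  proof (rule Bochner_Integration.integrable_bound[OF integrable_real_indicator[OF B_sets B_fin[of b]]])
    show "F \<in> borel_measurable M" by (rule Fm)
    show "AE x in M. norm (F x) \<le> norm (indicator (B b) x :: real)"
      using h_bound[of a k n] h_bound[of a k m]
      by (auto simp: F_def indicator_def abs_mult intro!: mult_le_one)
  qed
  have intFt: "integrable M (\<lambda>x. F (x + t ds))" if "ds \<in> L" for ds
  proof (rule Bochner_Integration.integrable_bound[OF integrable_real_indicator[OF B_sets B_fin[of b]]])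
    show "(\<lambda>x. F (x + t ds)) \<in> borel_measurable M"
      using measurable_compose[OF transl_meas Fm] by simp
    show "AE x in M. norm (F (x + t ds)) \<le> norm (indicator (B b) x :: real)"
      using h_bound[of a k n] h_bound[of a k m] Fshift[OF that]
      by (auto simp: indicator_def abs_mult intro!: mult_le_one)
  qed
  have "real (card L) * integral\<^sup>L M F = (\<Sum>ds\<in>L. integral\<^sup>L M (\<lambda>x. F (x + t ds)))"
    using integral_transl[OF Fm] by simp
  also have "\<dots> = integral\<^sup>L M (\<lambda>x. \<Sum>ds\<in>L. F (x + t ds))"
    by (rule Bochner_Integration.integral_sum[symmetric]) (rule intFt)
  also have "\<dots> = integral\<^sup>L M (\<lambda>x. indicator (B b) x * h a k n x * (\<Sum>ds\<in>L. h a k m (x + t ds)))"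
    by (intro Bochner_Integration.integral_cong refl) (simp add: Fshift sum_distrib_left)
  also have "\<dots> = 0" by (simp add: sum0)
  finally have "real (card L) * integral\<^sup>L M F = 0" .
  moreover have "card L \<noteq> 0" using q2 by (simp add: L_def LS_card)
  ultimately have "integral\<^sup>L M F = 0" by simp
  then show ?thesis unfolding F_def by simp
qed

end

lemma S_lip: fixes S :: "nat \<Rightarrow> real"
  assumes "\<And>n. \<bar>S (Suc n) - S n\<bar> \<le> 1" "M \<le> N"
  shows "\<bar>S N - S M\<bar> \<le> real (N - M)"
  using assms(2)
proof (induction N rule: dec_induct)
  case base then show ?case by simp
next
  case (step N)
  have "\<bar>S (Suc N) - S M\<bar> \<le> \<bar>S (Suc N) - S N\<bar> + \<bar>S N - S M\<bar>" by linarith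
  also have "\<dots> \<le> 1 + real (N - M)" using assms(1)[of N] step by linarith
  finally show ?case using step by (simp add: of_nat_diff)
qed

lemma sq_le1: "\<bar>y::real\<bar> \<le> 1 \<Longrightarrow> y^2 \<le> 1"
  using abs_le_square_iff[of y 1] by simp

lemma aux_div: "0 < N \<Longrightarrow> real (2 * k * N) * m / (real N)^2 = real (2 * k) * m / real N"
  by (simp add: power2_eq_square field_simps)

lemma floor_sqrt_at_top: "filterlim floor_sqrt at_top sequentially"
  unfolding filterlim_at_top eventually_sequentially
  by (intro allI exI[of _ "_ ^ 2"]) (auto simp: le_floor_sqrt_iff)

lemma interp: fixes S :: "nat \<Rightarrow> real"
  assumes "S 0 = 0" "\<And>n. \<bar>S (Suc n) - S n\<bar> \<le> 1"
    and lim: "(\<lambda>j. S ((j+1)^2) / real ((j+1)^2)) \<longlonglongrightarrow> 0"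
  shows "(\<lambda>N. S N / real N) \<longlonglongrightarrow> 0"
proof -
  define a where "a r = \<bar>S (r^2)\<bar> / real (r^2) + 2 / real r" for r
  have "(\<lambda>j. a (Suc j)) \<longlonglongrightarrow> 0"
  proof -
    have "(\<lambda>j. \<bar>S ((j+1)^2) / real ((j+1)^2)\<bar>) \<longlonglongrightarrow> 0" using tendsto_rabs_zero[OF lim] .
    moreover have "(\<lambda>j. 2 / real (Suc j)) \<longlonglongrightarrow> 0"
      using tendsto_mult[OF tendsto_const LIMSEQ_inverse_real_of_nat, of 2] by (simp add: divide_inverse)
    ultimately have "(\<lambda>j. \<bar>S ((j+1)^2) / real ((j+1)^2)\<bar> + 2 / real (Suc j)) \<longlonglongrightarrow> 0 + 0"
      by (rule tendsto_add)
    then show ?thesis by (simp add: a_def)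
  qed
  then have alim: "a \<longlonglongrightarrow> 0" by (rule LIMSEQ_imp_Suc)
  have L1: "(\<lambda>N. a (floor_sqrt N)) \<longlonglongrightarrow> 0" by (rule filterlim_compose[OF alim floor_sqrt_at_top])
  have L2: "\<forall>\<^sub>F N in sequentially. norm (S N / real N) \<le> a (floor_sqrt N)"
    unfolding eventually_sequentially
  proof (intro exI[of _ 1] allI impI)
    fix N :: nat assume N: "1 \<le> N"
    define r where "r = floor_sqrt N"
    have r1: "1 \<le> r" using N by (simp add: r_def le_floor_sqrt_iff)
    have rN: "r^2 \<le> N" by (simp add: r_def floor_sqrt_power2_le)
    have Nr: "N < (Suc r)^2" using Suc_floor_sqrt_power2_gt r_def by simp
    have "\<bar>S N - S (r^2)\<bar> \<le> real (N - r^2)" by (rule S_lip[of S, OF assms(2) rN])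
    also have "real (N - r^2) \<le> 2 * real r"
    proof -
      have "N - r^2 \<le> 2 * r" using Nr by (simp add: power2_eq_square)
      then show ?thesis by linarith
    qed
    finally have "\<bar>S N\<bar> \<le> \<bar>S (r^2)\<bar> + 2 * real r" by linarith
    then have "\<bar>S N\<bar> / real N \<le> (\<bar>S (r^2)\<bar> + 2 * real r) / real N"
      using N by (simp add: divide_right_mono)
    also have "\<dots> \<le> (\<bar>S (r^2)\<bar> + 2 * real r) / real (r^2)"
    proof -
      have "real r * real r \<le> real N" using rN by (metis of_nat_le_iff of_nat_mult power2_eq_square)
      moreover have "0 < real N * (real r * real r)" using N r1 by simp
      ultimately show ?thesis by (intro divide_left_mono) (auto simp: power2_eq_square)
    qed
    also have "\<dots> = a r" using r1 by (simp add: a_def add_divide_distrib power2_eq_square)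
    finally show "norm (S N / real N) \<le> a (floor_sqrt N)" by (simp add: r_def)
  qed
  show ?thesis by (rule Lim_null_comparison[OF L2 L1])
qed

context haarctx
begin

definition S :: "'a \<Rightarrow> nat \<Rightarrow> nat \<Rightarrow> 'a \<Rightarrow> real" where
  "S a k N x = (\<Sum>n\<in>{1..N}. h a k n x)"

lemma S_meas[measurable]: "S a k N \<in> borel_measurable M" unfolding S_def by measurable

lemma int_Bhh: "integrable M (\<lambda>x. indicator (B b) x * h a k n x * h a k m x)"
proof (rule Bochner_Integration.integrable_bound[OF integrable_real_indicator[OF B_sets B_fin[of b]]])
  show "(\<lambda>x. indicator (B b) x * h a k n x * h a k m x) \<in> borel_measurable M" by measurable
  show "AE x in M. norm (indicator (B b) x * h a k n x * h a k m x) \<le> norm (indicator (B b) x :: real)"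
    using h_bound[of a k n] h_bound[of a k m]
    by (auto simp: indicator_def abs_mult intro!: mult_le_one)
qed

lemma term_bound:
  assumes a: "av a \<le> 1"
  shows "integral\<^sup>L M (\<lambda>x. indicator (B b) x * h a k n x * h a k m x)
    \<le> (if m < n + k \<and> n < m + k then measure M (B b) else 0)"
proof (cases "m < n + k \<and> n < m + k")
  case True
  have "integral\<^sup>L M (\<lambda>x. indicator (B b) x * h a k n x * h a k m x) \<le> integral\<^sup>L M (indicator (B b))"
  proof (rule Bochner_Integration.integral_mono[OF int_Bhh integrable_real_indicator[OF B_sets B_fin[of b]]])
    fix x
    have "\<bar>h a k n x * h a k m x\<bar> \<le> 1" using h_bound[of a k n x] h_bound[of a k m x]
      by (simp add: abs_mult mult_le_one)
    then show "indicator (B b) x * h a k n x * h a k m x \<le> indicator (B b) x"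
      by (auto simp: indicator_def)
  qed
  then show ?thesis using True by simp
next
  case False
  then have "n + k \<le> m \<or> m + k \<le> n" by auto
  then have "integral\<^sup>L M (\<lambda>x. indicator (B b) x * h a k n x * h a k m x) = 0"
  proof
    assume "n + k \<le> m" then show ?thesis by (rule orth[OF a])
  next
    assume "m + k \<le> n"
    then have "integral\<^sup>L M (\<lambda>x. indicator (B b) x * h a k m x * h a k n x) = 0" by (rule orth[OF a])
    then show ?thesis by (simp add: ac_simps)
  qed
  then show ?thesis using False by simp
qed

lemma card_near: "card {m \<in> {1..N}. m < n + k \<and> n < m + k} \<le> 2 * k"
proof -
  have "{m \<in> {1..N}. m < n + k \<and> n < m + k} \<subseteq> {n - k<..<n + k}" by auto
  then have "card {m \<in> {1..N}. m < n + k \<and> n < m + k} \<le> card {n - k<..<n + k}"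
    by (intro card_mono) auto
  also have "\<dots> \<le> 2 * k" by simp
  finally show ?thesis .
qed

lemma var_bound:
  assumes a: "av a \<le> 1"
  shows "integral\<^sup>L M (\<lambda>x. indicator (B b) x * (S a k N x)^2) \<le> real (2 * k * N) * measure M (B b)"
proof -
  have eq: "indicator (B b) x * (S a k N x)^2 =
      (\<Sum>n\<in>{1..N}. \<Sum>m\<in>{1..N}. indicator (B b) x * h a k n x * h a k m x)" for x
    by (cases "x \<in> B b") (simp_all add: S_def power2_eq_square sum_product)
  have "integral\<^sup>L M (\<lambda>x. indicator (B b) x * (S a k N x)^2)
      = (\<Sum>n\<in>{1..N}. \<Sum>m\<in>{1..N}. integral\<^sup>L M (\<lambda>x. indicator (B b) x * h a k n x * h a k m x))"
    unfolding eq
    by (subst Bochner_Integration.integral_sum, rule Bochner_Integration.integrable_sum, rule int_Bhh)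
       (subst Bochner_Integration.integral_sum, rule int_Bhh, rule refl)
  also have "\<dots> \<le> (\<Sum>n\<in>{1..N}. \<Sum>m\<in>{1..N}. (if m < n + k \<and> n < m + k then measure M (B b) else 0))"
    by (intro sum_mono term_bound[OF a])
  also have "\<dots> = (\<Sum>n\<in>{1..N}. real (card {m \<in> {1..N}. m < n + k \<and> n < m + k}) * measure M (B b))"
    by (simp add: sum.If_cases Int_def)
  also have "\<dots> \<le> (\<Sum>n\<in>{1..N}. real (2 * k) * measure M (B b))"
  proof (intro sum_mono mult_right_mono)
    fix n show "real (card {m \<in> {1..N}. m < n + k \<and> n < m + k}) \<le> real (2 * k)"
      using card_near[of N n k] by (simp only: of_nat_le_iff)
  qed simp
  also have "\<dots> = real (2 * k * N) * measure M (B b)" by simp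
  finally show ?thesis .
qed

lemma AE_sub:
  assumes a: "av a \<le> 1"
  shows "AE x in M. x \<in> B b \<longrightarrow> (\<lambda>j. S a k ((j+1)^2) x / real ((j+1)^2)) \<longlonglongrightarrow> 0"
proof -
  define W where "W j x = indicator (B b) x * (S a k ((j+1)^2) x / real ((j+1)^2))^2" for j x
  define c where "c = real (2 * k) * measure M (B b)"
  have Wm[measurable]: "W j \<in> borel_measurable M" for j unfolding W_def by measurable
  have Wnn: "0 \<le> W j x" for j x by (simp add: W_def)
  have intW: "integrable M (W j)" for j
  proof (rule Bochner_Integration.integrable_bound[OF integrable_real_indicator[OF B_sets B_fin[of b]]])
    show "W j \<in> borel_measurable M" by (rule Wm)
    have bnd: "\<bar>S a k N x\<bar> \<le> real N" for N x
    proof -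
      have "\<bar>S a k N x\<bar> \<le> (\<Sum>n\<in>{1..N}. \<bar>h a k n x\<bar>)" unfolding S_def by (rule sum_abs)
      also have "\<dots> \<le> (\<Sum>n\<in>{1..N}. 1)" by (intro sum_mono h_bound)
      finally show ?thesis by simp
    qed
    have gen: "\<bar>S a k N x / real N\<bar> \<le> 1" for N x
    proof (cases "N = 0")
      case False
      then show ?thesis using bnd[of N x] by (simp add: abs_divide divide_le_eq_1_pos)
    qed simp
    have "(S a k ((j+1)^2) x / real ((j+1)^2))^2 \<le> 1" for x by (rule sq_le1) (rule gen)
    then show "AE x in M. norm (W j x) \<le> norm (indicator (B b) x :: real)"
      by (auto simp: W_def indicator_def)
  qed
  have intW_le: "integral\<^sup>L M (W j) \<le> c / real ((j+1)^2)" for j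
  proof -
    have Weq: "W j = (\<lambda>x. indicator (B b) x * (S a k ((j+1)^2) x)^2 / real ((j+1)^2)^2)"
      by (rule ext) (simp add: W_def power_divide)
    have "integral\<^sup>L M (W j) = integral\<^sup>L M (\<lambda>x. indicator (B b) x * (S a k ((j+1)^2) x)^2) / real ((j+1)^2)^2"
      unfolding Weq by (rule integral_divide_zero)
    also have "\<dots> \<le> real (2 * k * (j+1)^2) * measure M (B b) / real ((j+1)^2)^2"
      by (intro divide_right_mono var_bound[OF a]) simp
    also have "\<dots> = c / real ((j+1)^2)" unfolding c_def by (rule aux_div) simp
    finally show ?thesis .
  qed
  have c0: "0 \<le> c" by (simp add: c_def)
  have summ: "summable (\<lambda>j. c / real ((j+1)^2))"
  proof -
    have "summable (\<lambda>n. inverse (real n ^ 2))" by (rule inverse_power_summable) simp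
    then have "summable (\<lambda>j. inverse (real (j + 1) ^ 2))"
      using summable_iff_shift[of "\<lambda>n. inverse (real n ^ 2)" 1] by simp
    then have "summable (\<lambda>j. c * inverse (real (j + 1) ^ 2))" by (rule summable_mult)
    then show ?thesis by (simp add: divide_inverse)
  qed
  have intnn: "0 \<le> integral\<^sup>L M (W j)" for j by (rule Bochner_Integration.integral_nonneg) (rule Wnn)
  have summW: "summable (\<lambda>j. integral\<^sup>L M (W j))"
  proof (rule summable_comparison_test[OF _ summ])
    have "norm (integral\<^sup>L M (W n)) \<le> c / real ((n+1)^2)" for n
    proof -
      have "norm (integral\<^sup>L M (W n)) = integral\<^sup>L M (W n)" using intnn[of n] by simp
      then show ?thesis using intW_le[of n] by simp
    qed
    then show "\<exists>N. \<forall>n\<ge>N. norm (integral\<^sup>L M (W n)) \<le> c / real ((n+1)^2)" by blast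
  qed
  have "(\<integral>\<^sup>+ x. (\<Sum>j. ennreal (W j x)) \<partial>M) = (\<Sum>j. \<integral>\<^sup>+ x. ennreal (W j x) \<partial>M)"
    by (rule nn_integral_suminf) measurable
  also have "\<dots> = (\<Sum>j. ennreal (integral\<^sup>L M (W j)))"
    by (intro suminf_cong nn_integral_eq_integral intW) (simp add: Wnn)
  also have "\<dots> \<noteq> \<infinity>" using ennreal_suminf_neq_top[OF summW intnn] by simp
  finally have "AE x in M. (\<Sum>j. ennreal (W j x)) \<noteq> \<infinity>"
    by (intro nn_integral_PInf_AE) measurable
  then show ?thesis
  proof (rule AE_mp, intro AE_I2 impI)
    fix x assume fin: "(\<Sum>j. ennreal (W j x)) \<noteq> \<infinity>" and xB: "x \<in> B b"
    define y where "y j = S a k ((j+1)^2) x / real ((j+1)^2)" for j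
    have "summable (\<lambda>j. W j x)" by (rule summable_suminf_not_top) (use Wnn fin in auto)
    then have "(\<lambda>j. W j x) \<longlonglongrightarrow> 0" by (rule summable_LIMSEQ_zero)
    moreover have "(\<lambda>j. W j x) = (\<lambda>j. (y j)^2)" using xB by (simp add: W_def y_def)
    ultimately have "(\<lambda>j. (y j)^2) \<longlonglongrightarrow> 0" by simp
    then have "(\<lambda>j. sqrt ((y j)^2)) \<longlonglongrightarrow> sqrt 0" by (rule tendsto_real_sqrt)
    then have "(\<lambda>j. \<bar>y j\<bar>) \<longlonglongrightarrow> 0" by (simp only: real_sqrt_abs real_sqrt_zero)
    then have "y \<longlonglongrightarrow> 0" by (rule tendsto_rabs_zero_cancel)
    then show "(\<lambda>j. S a k ((j+1)^2) x / real ((j+1)^2)) \<longlonglongrightarrow> 0" by (simp add: y_def[abs_def])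
  qed
qed

end

context haarctx
begin

lemma conv_on_B:
  assumes a: "av a \<le> 1"
  shows "AE x in M. x \<in> B b \<longrightarrow>
    (\<lambda>N. real (card {n\<in>{1..N}. beta ^ n * x \<in> Gd a k}) / real N) \<longlonglongrightarrow> Q (- int k)"
  using AE_sub[OF a, of b k]
proof (rule AE_mp, intro AE_I2 impI)
  fix x assume xB: "x \<in> B b"
    and lim: "x \<in> B b \<longrightarrow> (\<lambda>j. S a k ((j+1)^2) x / real ((j+1)^2)) \<longlonglongrightarrow> 0"
  define T where "T N = S a k N x" for N
  have T0: "T 0 = 0" by (simp add: T_def S_def)
  have T1: "\<bar>T (Suc n) - T n\<bar> \<le> 1" for n
    using h_bound[of a k "Suc n" x] by (simp add: T_def S_def)
  have "(\<lambda>j. T ((j+1)^2) / real ((j+1)^2)) \<longlonglongrightarrow> 0" using lim xB by (simp add: T_def)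
  then have TN: "(\<lambda>N. T N / real N) \<longlonglongrightarrow> 0" by (rule interp[OF T0 T1])
  have cardeq: "real (card {n\<in>{1..N}. beta ^ n * x \<in> Gd a k}) = T N + real N * Q (- int k)" for N
  proof -
    have "(\<Sum>n\<in>{1..N}. indicator (Gd a k) (beta ^ n * x) :: real)
        = real (card {n\<in>{1..N}. beta ^ n * x \<in> Gd a k})"
      by (simp add: indicator_def sum.If_cases Int_def)
    moreover have "T N = (\<Sum>n\<in>{1..N}. indicator (Gd a k) (beta ^ n * x)) - real N * Q (- int k)"
      by (simp add: T_def S_def h_def sum_subtractf)
    ultimately show ?thesis by simp
  qed
  have "(\<lambda>N. T N / real N + Q (- int k)) \<longlonglongrightarrow> 0 + Q (- int k)"
    by (rule tendsto_add[OF TN tendsto_const])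
  then have L: "(\<lambda>N. T N / real N + Q (- int k)) \<longlonglongrightarrow> Q (- int k)" by simp
  have ev: "\<forall>\<^sub>F N in sequentially. T N / real N + Q (- int k) =
      real (card {n\<in>{1..N}. beta ^ n * x \<in> Gd a k}) / real N"
    unfolding eventually_sequentially
  proof (intro exI[of _ 1] allI impI)
    fix N :: nat assume N: "1 \<le> N"
    have "real (card {n\<in>{1..N}. beta ^ n * x \<in> Gd a k}) / real N = (T N + real N * Q (- int k)) / real N"
      by (simp only: cardeq)
    also have "\<dots> = T N / real N + Q (- int k)" using N by (simp add: add_divide_distrib)
    finally show "T N / real N + Q (- int k) = real (card {n\<in>{1..N}. beta ^ n * x \<in> Gd a k}) / real N"
      by simp
  qed
  show "(\<lambda>N. real (card {n\<in>{1..N}. beta ^ n * x \<in> Gd a k}) / real N) \<longlonglongrightarrow> Q (- int k)"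
    by (rule Lim_transform_eventually[OF L ev])
qed

lemma main: "AE x in M. unif_distr av q (\<lambda>n. int_part av prm C (beta ^ n * x))"
proof -
  define P where "P k b a' x \<longleftrightarrow> (x \<in> B b \<longrightarrow>
    (\<lambda>N. real (card {n\<in>{1..N}. beta ^ n * x \<in> Gd a' k}) / real N) \<longlonglongrightarrow> Q (- int k))" for k b a' x
  have "AE x in M. \<forall>k. \<forall>b\<in>Fr. \<forall>a'\<in>val 0 ` LS k. P k b a' x"
  proof (subst AE_all_countable, intro allI)
    fix k
    show "AE x in M. \<forall>b\<in>Fr. \<forall>a'\<in>val 0 ` LS k. P k b a' x"
    proof (subst AE_ball_countable[OF Fr_countable], intro ballI)
      fix b
      show "AE x in M. \<forall>a'\<in>val 0 ` LS k. P k b a' x"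
      proof (subst AE_ball_countable, rule countable_finite, rule finite_imageI, rule LS_fin, intro ballI)
        fix a' assume "a' \<in> val 0 ` LS k"
        then obtain ds where "ds \<in> LS k" "a' = val 0 ds" by blast
        then have "av a' \<le> 1" using V1[of ds 0] by (simp add: LS_def)
        then show "AE x in M. P k b a' x" unfolding P_def by (rule conv_on_B)
      qed
    qed
  qed
  then show ?thesis
  proof (rule AE_mp, intro AE_I2 impI)
    fix x assume H: "\<forall>k. \<forall>b\<in>Fr. \<forall>a'\<in>val 0 ` LS k. P k b a' x"
    show "unif_distr av q (\<lambda>n. int_part av prm C (beta ^ n * x))"
      unfolding unif_distr_def
    proof (intro conjI allI ballI)
      fix n show "int_part av prm C (beta ^ n * x) \<in> val_ring av" by (rule int_part_O)
    next
      fix a k assume aO: "a \<in> val_ring av"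
      then have a: "av a \<le> 1" by (simp add: val_ring_def)
      then have "av a \<le> Q (- 0)" by simp
      from E[OF this, of k] obtain ds where ds: "set ds \<subseteq> C" "length ds = k"
        "av (a - val 0 ds) \<le> Q (- int k)" by auto
      define a' where "a' = val 0 ds"
      have a'L: "a' \<in> val 0 ` LS k" using ds by (simp add: a'_def LS_def)
      have Geq: "Gd a k = Gd a' k" using ds(3) unfolding a'_def by (rule Gd_cong)
      have xB: "x \<in> B (rFr x)" using rFr(2)[of x] by (simp add: B_def disc_def)
      have lim: "(\<lambda>N. real (card {n\<in>{1..N}. beta ^ n * x \<in> Gd a' k}) / real N) \<longlonglongrightarrow> Q (- int k)"
      proof -
        have "P k (rFr x) a' x" using H rFr(1)[of x] a'L by blast
        then show ?thesis using xB unfolding P_def by (rule mp)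
      qed
      have qq: "real q powr (- real k) = Q (- int k)" by (simp add: Q_def)
      have seteq: "{n\<in>{1..N}. int_part av prm C (beta ^ n * x) \<in> disc av a (Q (- int k))}
          = {n\<in>{1..N}. beta ^ n * x \<in> Gd a' k}" for N
        using int_part_disc[OF a, of _ k, unfolded qq] Geq by simp
      show "(\<lambda>N. real (card {n\<in>{1..N}. int_part av prm C (beta ^ n * x) \<in> disc av a (real q powr (- real k))}) / real N)
          \<longlonglongrightarrow> real q powr (- real k)"
        unfolding qq seteq by (rule lim)
    qed
  qed
qed

end

theorem corollary1p3:
  fixes av :: "'a::field \<Rightarrow> real" and q :: nat and prm beta :: 'a and C :: "'a set"
    and M :: "'a measure"
  assumes "nonarch_local_field av q prm C"
    and "av beta > 1"
    and "haar_measure av M"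
  shows "AE x in M. unif_distr av q (\<lambda>n. int_part av prm C (beta ^ n * x))"
proof -
  note L = assms(1)[unfolded nonarch_local_field_def]
  have z: "\<forall>x. av x = 0 \<longleftrightarrow> x = 0" using L[THEN conjunct2, THEN conjunct1] .
  have g: "\<forall>x. x \<noteq> 0 \<longrightarrow> (\<exists>k::int. av x = real q powr real_of_int k)"
    using L[THEN conjunct2, THEN conjunct2, THEN conjunct2, THEN conjunct2, THEN conjunct1] .
  have "beta \<noteq> 0"
  proof
    assume "beta = 0"
    then have "av beta = 0" using z by blast
    then show False using assms(2) by simp
  qed
  then obtain k :: int where k: "av beta = real q powr real_of_int k" using g by blast
  have q2: "2 \<le> q"
  proof (rule ccontr)
    assume "\<not> 2 \<le> q"
    then have "q = 0 \<or> q = 1" by linarith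
    then have "av beta \<le> 1"
    proof
      assume "q = 0" then show ?thesis using k by simp
    next
      assume "q = 1" then show ?thesis using k by simp
    qed
    then show False using assms(2) by simp
  qed
  interpret haarctx av q prm C M beta
    apply (rule haarctx.intro)
     apply (rule nalf.intro)
      apply (rule assms(1))
     apply (rule q2)
    apply (rule haarctx_axioms.intro)
     apply (rule assms(3))
    apply (rule assms(2))
    done
  show ?thesis by (rule main)
qed

end
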